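(* Let $p,n$ be positive integers with $c=\gcd(p,n)$ prime, let $d=n/c$ and $y\in\mathbb{Z}_n$. Let $G\cong K_{c-1,d}$ and $H\cong K_{1,n}$ with disjoint vertex sets. Then $\mathcal{Q}_{(\mathbb{Z}_n,y,y)}(\widetilde{\mathcal{T}(p,2)})\cong G\,\overrightarrow{\triangledown_d}\,H$. Explicitly, the trivial coloring carries $n$ loops and has no outgoing arcs to other vertices, and for each nontrivial coloring $\alpha$ and each coloring $\beta$ (trivial or not) there are exactly $d$ arcs from $\alpha$ to $\beta$.
   Context: $\mathbb{Z}_n$ is the dihedral quandle ($x\triangleright y=2y-x$ mod $n$) and $(\mathbb{Z}_n,y,y)$ the $2$-pointed quandle with both basepoints $y$. $P(\widetilde{\mathcal{T}(p,2)})=(Q,x_1,x_{p+1})$ with $Q=\langle x_1,\dots,x_{p+1}\mid x_p=x_2\triangleright x_{p+1},\ x_i=x_{i+2}\triangleright x_{i+1}\ (1\le i\le p-1)\rangle$, the fundamental pointed quandle of the $1$-linkoid of $(p,2)$-torus type. For a pointed quandle $\mathcal{X}$, the full pointed quandle coloring quiver $\mathcal{Q}_{\mathcal{X}}(L)$ is the directed multigraph with vertex set $\hom(P(L),\mathcal{X})$ (basepoint-preserving homomorphisms) and $|\{\varphi\in\operatorname{End}(\mathcal{X}):\varphi\circ\alpha=\beta\}|$ arcs from $\alpha$ to $\beta$, with $\operatorname{End}(\mathcal{X})$ the pointed endomorphisms. A directed multigraph is a pair $(V,w)$, $w:V\times V\to\mathbb{Z}_{\ge0}$ counting arcs. $K_{m,k}$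 is the directed multigraph on $\{1,\dots,m\}$ with $w(u,v)=k$ for all $u,v$ (loops included). For directed multigraphs $G=(V(G),w_G)$, $H=(V(H),w_H)$ with disjoint vertex sets, the $k$-directed join $G\,\overrightarrow{\triangledown_k}\,H$ has vertex set $V(G)\cup V(H)$ and $w(u,v)=w_G(u,v)$ if $u,v\in V(G)$, $w_H(u,v)$ if $u,v\in V(H)$, $k$ if $u\in V(G),v\in V(H)$, and $0$ if $u\in V(H),v\in V(G)$. *)

theory Defs
  imports Main "HOL-Computational_Algebra.Primes"
begin

text \<open>Dihedral quandle Z_n, elements represented by the integers 0..n-1.\<close>
definition dih_op :: "int \<Rightarrow> int \<Rightarrow> int \<Rightarrow> int" where
  "dih_op n x y = (2 * y - x) mod n"

definition Zn :: "int \<Rightarrow> int set" where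
  "Zn n = {0..<n}"

text \<open>Basepoint-preserving homomorphisms from the fundamental pointed quandle
  P(T~(p,2)) = (Q, x_1, x_(p+1)) to (Z_n, y, y). By the universal property of the
  presentation of Q, these are exactly the assignments of the generators
  x_1,...,x_(p+1) to elements of Z_n satisfying the defining relations and sending
  x_1 and x_(p+1) to y.\<close>
definition torus_colorings :: "nat \<Rightarrow> int \<Rightarrow> int \<Rightarrow> (nat \<Rightarrow> int) set" where
  "torus_colorings p n y = {x.
     (\<forall>i\<in>{1..p+1}. x i \<in> Zn n) \<and> (\<forall>i. i \<notin> {1..p+1} \<longrightarrow> x i = 0) \<and>
     x p = dih_op n (x 2) (x (p+1)) \<and>
     (\<forall>i\<in>{1..p-1}. x i = dih_op n (x (i+2)) (x (i+1))) \<and>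
     x 1 = y \<and> x (p+1) = y}"

definition dih_pointed_End :: "int \<Rightarrow> int \<Rightarrow> (int \<Rightarrow> int) set" where
  "dih_pointed_End n y = {f.
     (\<forall>a\<in>Zn n. f a \<in> Zn n) \<and> (\<forall>a. a \<notin> Zn n \<longrightarrow> f a = 0) \<and>
     (\<forall>a\<in>Zn n. \<forall>b\<in>Zn n. f (dih_op n a b) = dih_op n (f a) (f b)) \<and>
     f y = y}"

definition torus_arcs :: "nat \<Rightarrow> int \<Rightarrow> int \<Rightarrow> (nat \<Rightarrow> int) \<Rightarrow> (nat \<Rightarrow> int) \<Rightarrow> nat" where
  "torus_arcs p n y \<alpha> \<beta> =
     card {f \<in> dih_pointed_End n y. \<forall>i\<in>{1..p+1}. f (\<alpha> i) = \<beta> i}"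

text \<open>Directed multigraphs as pairs (V, w); only the values of w on V x V matter.\<close>
type_synonym 'v dmg = "'v set \<times> ('v \<Rightarrow> 'v \<Rightarrow> nat)"

definition full_pointed_coloring_quiver_torus :: "nat \<Rightarrow> int \<Rightarrow> int \<Rightarrow> (nat \<Rightarrow> int) dmg" where
  "full_pointed_coloring_quiver_torus p n y = (torus_colorings p n y, torus_arcs p n y)"

definition dmg_iso :: "'a dmg \<Rightarrow> 'b dmg \<Rightarrow> bool" where
  "dmg_iso G H \<longleftrightarrow> (\<exists>f. bij_betw f (fst G) (fst H) \<and>
     (\<forall>u\<in>fst G. \<forall>v\<in>fst G. snd G u v = snd H (f u) (f v)))"

definition complete_dmg :: "nat \<Rightarrow> nat \<Rightarrow> nat dmg" where
  "complete_dmg m k = ({1..m}, \<lambda>u v. k)"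

definition directed_join :: "'v dmg \<Rightarrow> nat \<Rightarrow> 'v dmg \<Rightarrow> 'v dmg" where
  "directed_join G k H = (fst G \<union> fst H, \<lambda>u v.
     if u \<in> fst G \<and> v \<in> fst G then snd G u v
     else if u \<in> fst H \<and> v \<in> fst H then snd H u v
     else if u \<in> fst G \<and> v \<in> fst H then k
     else 0)"

end

theory Submission
  imports Defs
begin


lemma P1: "((y::int) + (x mod n - z) * u) mod n = (y + (x - z) * u) mod n"
proof -
  have "((x mod n - z) * u) mod n = ((x - z) * u) mod n"
    by (metis mod_mult_left_eq mod_diff_left_eq)
  thus ?thesis by (metis mod_add_right_eq)
qed
lemma P4: "((y::int) + (x mod n) * u) mod n = (y + x * u) mod n"
  by (metis mod_add_right_eq mod_mult_left_eq)
lemma P2: "(2 * ((a::int) mod n) - b) mod n = (2*a - b) mod n"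
proof -
  have "(2 * (a mod n)) mod n = (2*a) mod n" by (rule mod_mult_right_eq)
  thus ?thesis by (metis mod_diff_left_eq)
qed
lemma P3: "(c - (b::int) mod n) mod n = (c - b) mod n"
  by (rule mod_diff_right_eq)

definition FF :: "int \<Rightarrow> int \<Rightarrow> int \<Rightarrow> int \<Rightarrow> int" where
  "FF n y u = (\<lambda>a. if a \<in> Zn n then (y + (a - y) * u) mod n else 0)"

lemma FF_End:
  assumes "n > 0" "y \<in> Zn n"
  shows "FF n y u \<in> dih_pointed_End n y"
proof -
  have "FF n y u (dih_op n a b) = dih_op n (FF n y u a) (FF n y u b)"
    if "a \<in> Zn n" "b \<in> Zn n" for a b
  proof -
    have "dih_op n a b \<in> Zn n" using assms by (simp add: dih_op_def Zn_def)
    hence "FF n y u (dih_op n a b) = (y + ((2*b - a) mod n - y) * u) mod n"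
      by (simp add: FF_def dih_op_def)
    also have "\<dots> = (y + (2*b - a - y) * u) mod n" by (rule P1)
    also have "\<dots> = (2 * (y + (b - y) * u) - (y + (a - y) * u)) mod n"
      by (simp add: algebra_simps)
    also have "\<dots> = dih_op n (FF n y u a) (FF n y u b)"
      using that by (simp add: FF_def dih_op_def P2 P3)
    finally show ?thesis .
  qed
  moreover have "FF n y u y = y" using assms by (simp add: FF_def Zn_def)
  ultimately show ?thesis using assms
    by (auto simp: dih_pointed_End_def FF_def Zn_def)
qed

lemma End_char:
  assumes "n > 0" "y \<in> Zn n" "f \<in> dih_pointed_End n y"
  shows "f = FF n y ((f ((y+1) mod n) - y) mod n)"
proof -
  define u where "u = (f ((y+1) mod n) - y) mod n"
  have inZ: "\<And>a. a \<in> Zn n \<Longrightarrow> f a \<in> Zn n"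
    and hom: "\<And>a b. a \<in> Zn n \<Longrightarrow> b \<in> Zn n \<Longrightarrow> f (dih_op n a b) = dih_op n (f a) (f b)"
    and out: "\<And>a. a \<notin> Zn n \<Longrightarrow> f a = 0" and fy: "f y = y"
    using assms(3) by (auto simp: dih_pointed_End_def)
  have modZ: "\<And>a. a mod n \<in> Zn n" using assms(1) by (simp add: Zn_def)
  have key: "f ((y + int k) mod n) = (y + int k * u) mod n \<and>
             f ((y + int (k+1)) mod n) = (y + int (k+1) * u) mod n" for k
  proof (induction k)
    case 0
    have "y mod n = y" using assms by (simp add: Zn_def)
    moreover have "f ((y+1) mod n) mod n = f ((y+1) mod n)"
      using inZ[OF modZ] by (simp add: Zn_def)
    ultimately show ?case using fy by (simp add: u_def mod_simps)
  next
    case (Suc k)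
    have e: "dih_op n ((y + int k) mod n) ((y + int (k+1)) mod n) = (y + int (k+2)) mod n"
    proof -
      have "dih_op n ((y + int k) mod n) ((y + int (k+1)) mod n) = (2 * (y + int (k+1)) - (y + int k)) mod n"
        by (simp only: dih_op_def P2 P3)
      also have "\<dots> = (y + int (k+2)) mod n" by (simp add: algebra_simps)
      finally show ?thesis .
    qed
    have "f ((y + int (k+2)) mod n) = dih_op n (f ((y + int k) mod n)) (f ((y + int (k+1)) mod n))"
      using hom[OF modZ modZ] e by metis
    also have "\<dots> = (2 * (y + int (k+1) * u) - (y + int k * u)) mod n"
      using Suc.IH by (simp add: dih_op_def P2 P3)
    also have "\<dots> = (y + int (k+2) * u) mod n" by (simp add: algebra_simps)
    finally show ?case using Suc.IH by (simp add: add.commute)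
  qed
  have "f = FF n y u"
  proof
    fix a
    show "f a = FF n y u a"
    proof (cases "a \<in> Zn n")
      case True
      define k where "k = nat ((a - y) mod n)"
      have k: "int k = (a - y) mod n" using assms(1) by (simp add: k_def)
      have "(y + int k) mod n = a mod n" by (simp add: k mod_simps)
      also have "\<dots> = a" using True by (simp add: Zn_def)
      finally have a: "(y + int k) mod n = a" .
      have "f a = (y + int k * u) mod n" using key[of k] a by simp
      also have "\<dots> = (y + (a - y) * u) mod n" by (simp add: k P4)
      finally show ?thesis using True by (simp add: FF_def)
    next
      case False
      thus ?thesis by (simp add: out FF_def)
    qed
  qed
  thus ?thesis by (simp add: u_def)
qed

lemma FF_inj:
  assumes "n > 0" "y \<in> Zn n"
  shows "inj_on (FF n y) {0..<n}"
proof
  fix u v assume uv: "u \<in> {0..<n}" "v \<in> {0..<n}" "FF n y u = FF n y v"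
  have "FF n y u ((y+1) mod n) = (y + u) mod n" for u
    using assms by (simp add: FF_def Zn_def P1)
  hence "(y + u) mod n = (y + v) mod n" using uv(3) by metis
  hence "u mod n = v mod n" by (metis mod_add_left_eq add_diff_cancel_left' mod_diff_left_eq)
  thus "u = v" using uv by simp
qed

lemma End_eq:
  assumes "n > 0" "y \<in> Zn n"
  shows "dih_pointed_End n y = FF n y ` {0..<n}"
proof
  show "dih_pointed_End n y \<subseteq> FF n y ` {0..<n}"
  proof
    fix f assume f: "f \<in> dih_pointed_End n y"
    have "(f ((y+1) mod n) - y) mod n \<in> {0..<n}" using assms by simp
    thus "f \<in> FF n y ` {0..<n}" using End_char[OF assms f] by blast
  qed
  show "FF n y ` {0..<n} \<subseteq> dih_pointed_End n y" using FF_End[OF assms] by blast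
qed



definition AP :: "nat \<Rightarrow> int \<Rightarrow> int \<Rightarrow> int \<Rightarrow> nat \<Rightarrow> int" where
  "AP p n y t = (\<lambda>i. if i \<in> {1..p+1} then (y + int (i-1) * t) mod n else 0)"

lemma modI: "(n::int) dvd (a - b) \<Longrightarrow> a mod n = b mod n"
  by (simp add: mod_eq_dvd_iff)

lemma col_AP:
  assumes "p > 0" "n > 0" "y \<in> Zn n" "x \<in> torus_colorings p n y"
  shows "x = AP p n y (x 2 - y)" "n dvd int p * (x 2 - y)"
proof -
  define t where "t = x 2 - y"
  have inZ: "\<And>i. i \<in> {1..p+1} \<Longrightarrow> x i \<in> Zn n"
    and out: "\<And>i. i \<notin> {1..p+1} \<Longrightarrow> x i = 0"
    and rel: "\<And>i. i \<in> {1..p-1} \<Longrightarrow> x i = dih_op n (x (i+2)) (x (i+1))"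
    and x1: "x 1 = y" and xp: "x (p+1) = y"
    using assms(4) by (auto simp: torus_colorings_def)
  have self: "\<And>i. i \<in> {1..p+1} \<Longrightarrow> x i mod n = x i"
    using inZ by (simp add: Zn_def)
  have key: "(k+1 \<le> p+1 \<longrightarrow> x (k+1) = (y + int k * t) mod n) \<and>
             (k+2 \<le> p+1 \<longrightarrow> x (k+2) = (y + int (k+1) * t) mod n)" for k
  proof (induction k)
    case 0
    have "y mod n = y" using assms by (simp add: Zn_def)
    moreover have "x 2 mod n = x 2" using self[of 2] assms(1) by simp
    ultimately show ?case using x1 by (simp add: t_def numeral_2_eq_2)
  next
    case (Suc k)
    have "x (k+3) = (y + int (k+2) * t) mod n" if le: "k+3 \<le> p+1"
    proof -
      have r: "x (k+1) = (2 * x (k+2) - x (k+3)) mod n"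
        using rel[of "k+1"] le by (simp add: dih_op_def add.assoc numeral_3_eq_3)
      have h1: "x (k+1) = (y + int k * t) mod n" and h2: "x (k+2) = (y + int (k+1) * t) mod n"
        using Suc.IH le by auto
      have "n dvd (x (k+1) - (2 * x (k+2) - x (k+3)))" using r by (metis mod_eq_dvd_iff mod_mod_trivial)
      moreover have "n dvd (x (k+1) - (y + int k * t))" using h1 by (metis mod_eq_dvd_iff mod_mod_trivial)
      moreover have "n dvd (x (k+2) - (y + int (k+1) * t))" using h2 by (metis mod_eq_dvd_iff mod_mod_trivial)
      ultimately have "n dvd (x (k+3) - (y + int (k+2) * t))"
      proof -
        assume a: "n dvd (x (k+1) - (2 * x (k+2) - x (k+3)))" "n dvd (x (k+1) - (y + int k * t))"
          "n dvd (x (k+2) - (y + int (k+1) * t))"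
        have eq: "x (k+3) - (y + int (k+2) * t) = (x (k+1) - (2 * x (k+2) - x (k+3)))
           - (x (k+1) - (y + int k * t)) + 2 * (x (k+2) - (y + int (k+1) * t))"
          by (simp add: algebra_simps)
        have d: "n dvd (x (k+1) - (2 * x (k+2) - x (k+3)))
           - (x (k+1) - (y + int k * t)) + 2 * (x (k+2) - (y + int (k+1) * t))"
          by (rule dvd_add[OF dvd_diff[OF a(1) a(2)] dvd_mult[OF a(3)]])
        show ?thesis unfolding eq by (rule d)
      qed
      hence "x (k+3) mod n = (y + int (k+2) * t) mod n" by (rule modI)
      thus ?thesis using self[of "k+3"] le by simp
    qed
    thus ?case using Suc.IH by (simp add: numeral_3_eq_3 add.commute)
  qed
  have ap: "x i = (y + int (i-1) * t) mod n" if hi: "i \<in> {1..p+1}" for i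
  proof -
    obtain k where "i = k+1" using hi by (intro that[of "i-1"]) auto
    thus ?thesis using key[of k] that by auto
  qed
  show "x = AP p n y (x 2 - y)"
  proof
    fix i show "x i = AP p n y (x 2 - y) i"
      using ap out by (auto simp: AP_def t_def)
  qed
  have "y mod n = (y + int p * t) mod n" using ap[of "p+1"] xp assms(3) by (simp add: Zn_def)
  hence "n dvd (y + int p * t) - y" by (metis mod_eq_dvd_iff)
  thus "n dvd int p * (x 2 - y)" by (simp add: t_def)
qed

lemma AP_col:
  assumes "p > 0" "n > 0" "y \<in> Zn n" "n dvd int p * t"
  shows "AP p n y t \<in> torus_colorings p n y"
proof -
  let ?x = "AP p n y t"
  have "?x p = dih_op n (?x 2) (?x (p+1))"
  proof -
    have "?x p = (y + int (p-1) * t) mod n" using assms(1) by (simp add: AP_def)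
    also have "\<dots> = (2 * (y + int p * t) - (y + t)) mod n"
    proof (rule modI)
      have ip: "int (p-1) = int p - 1" using assms(1) by simp
      have eq: "(y + int (p-1) * t) - (2 * (y + int p * t) - (y + t)) = - (int p * t)"
        unfolding ip by (simp add: algebra_simps)
      have "n dvd - (int p * t)" using assms(4) by simp
      thus "n dvd (y + int (p-1) * t) - (2 * (y + int p * t) - (y + t))" unfolding eq .
    qed
    also have "\<dots> = dih_op n (?x 2) (?x (p+1))"
      using assms(1) by (simp add: AP_def dih_op_def P2 P3)
    finally show ?thesis .
  qed
  moreover have "?x i = dih_op n (?x (i+2)) (?x (i+1))" if "i \<in> {1..p-1}" for i
  proof -
    have hi: "i \<in> {1..p+1}" using that by auto
    have "?x i = (y + int (i-1) * t) mod n" using hi by (simp add: AP_def)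
    also have "\<dots> = (2 * (y + int i * t) - (y + int (i+1) * t)) mod n"
    proof -
      have "(y + int (i-1) * t) = (2 * (y + int i * t) - (y + int (i+1) * t))"
        using that by (simp add: of_nat_diff algebra_simps)
      thus ?thesis by simp
    qed
    also have "\<dots> = dih_op n (?x (i+2)) (?x (i+1))"
    proof -
      have "i+2 \<in> {1..p+1}" "i+1 \<in> {1..p+1}" using that by auto
      hence "?x (i+2) = (y + int (i+1) * t) mod n" "?x (i+1) = (y + int i * t) mod n"
        by (simp_all add: AP_def)
      thus ?thesis by (simp only: dih_op_def P2 P3)
    qed
    finally show ?thesis .
  qed
  moreover have "?x (p+1) = y"
  proof -
    have "?x (p+1) = (y + int p * t) mod n" by (simp add: AP_def)
    also have "\<dots> = y mod n" using assms(4) by (simp add: modI)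
    also have "\<dots> = y" using assms(3) by (simp add: Zn_def)
    finally show ?thesis .
  qed
  moreover have "?x 1 = y" using assms(3) by (simp add: AP_def Zn_def)
  moreover have "\<forall>i\<in>{1..p+1}. ?x i \<in> Zn n" using assms(2) by (simp add: AP_def Zn_def)
  moreover have "\<forall>i. i \<notin> {1..p+1} \<longrightarrow> ?x i = 0" by (simp add: AP_def)
  ultimately show ?thesis by (simp add: torus_colorings_def)
qed

lemma AP_mod: "AP p n y (t mod n) = AP p n y t"
proof -
  have "(y + a * (t mod n)) mod n = (y + a * t) mod n" for a :: int
    by (metis mod_add_right_eq mod_mult_right_eq)
  thus ?thesis by (auto simp: AP_def intro!: ext)
qed



lemma arcs_cond:
  assumes "p > 0" "n > 0" "y \<in> Zn n" "a \<in> torus_colorings p n y" "b \<in> torus_colorings p n y"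
  shows "(\<forall>i\<in>{1..p+1}. FF n y u (a i) = b i) \<longleftrightarrow> n dvd (a 2 - y) * u - (b 2 - y)"
proof -
  define ta tb where "ta = a 2 - y" and "tb = b 2 - y"
  have ea: "a = AP p n y ta" and eb: "b = AP p n y tb"
    using col_AP[OF assms(1-3)] assms(4,5) by (auto simp: ta_def tb_def)
  have one: "FF n y u (a i) = b i \<longleftrightarrow> n dvd int (i-1) * (ta * u - tb)" if "i \<in> {1..p+1}" for i
  proof -
    have "a i = (y + int (i-1) * ta) mod n" using that ea by (simp add: AP_def)
    moreover have "b i = (y + int (i-1) * tb) mod n" using that eb by (simp add: AP_def)
    moreover have "(y + int (i-1) * ta) mod n \<in> Zn n" using assms(2) by (simp add: Zn_def)
    ultimately have "FF n y u (a i) = (y + ((y + int (i-1) * ta) mod n - y) * u) mod n"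
      by (simp add: FF_def)
    also have "\<dots> = (y + (y + int (i-1) * ta - y) * u) mod n" by (rule P1)
    finally have "FF n y u (a i) = (y + int (i-1) * ta * u) mod n" by (simp add: algebra_simps)
    hence "FF n y u (a i) = b i \<longleftrightarrow> (y + int (i-1) * ta * u) mod n = (y + int (i-1) * tb) mod n"
      using \<open>b i = _\<close> by simp
    also have "\<dots> \<longleftrightarrow> n dvd (y + int (i-1) * ta * u) - (y + int (i-1) * tb)"
      by (rule mod_eq_dvd_iff)
    also have "(y + int (i-1) * ta * u) - (y + int (i-1) * tb) = int (i-1) * (ta * u - tb)"
      by (simp add: algebra_simps)
    finally show ?thesis .
  qed
  show ?thesis
  proof
    assume "\<forall>i\<in>{1..p+1}. FF n y u (a i) = b i"
    hence "n dvd int (2-1) * (ta * u - tb)" using one[of 2] assms(1) by auto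
    thus "n dvd (a 2 - y) * u - (b 2 - y)" by (simp add: ta_def tb_def)
  next
    assume "n dvd (a 2 - y) * u - (b 2 - y)"
    hence "n dvd int (i-1) * (ta * u - tb)" for i by (simp add: ta_def tb_def)
    thus "\<forall>i\<in>{1..p+1}. FF n y u (a i) = b i" using one by blast
  qed
qed

lemma arcs_eq:
  assumes "p > 0" "n > 0" "y \<in> Zn n" "a \<in> torus_colorings p n y" "b \<in> torus_colorings p n y"
  shows "torus_arcs p n y a b = card {u\<in>{0..<n}. n dvd (a 2 - y) * u - (b 2 - y)}"
proof -
  have "{f \<in> dih_pointed_End n y. \<forall>i\<in>{1..p+1}. f (a i) = b i}
      = FF n y ` {u\<in>{0..<n}. n dvd (a 2 - y) * u - (b 2 - y)}"
  proof -
    have "{f \<in> dih_pointed_End n y. \<forall>i\<in>{1..p+1}. f (a i) = b i}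
      = {f \<in> FF n y ` {0..<n}. \<forall>i\<in>{1..p+1}. f (a i) = b i}"
      unfolding End_eq[OF assms(2,3)] ..
    also have "\<dots> = FF n y ` {u\<in>{0..<n}. \<forall>i\<in>{1..p+1}. FF n y u (a i) = b i}"
      by blast
    also have "{u\<in>{0..<n}. \<forall>i\<in>{1..p+1}. FF n y u (a i) = b i}
       = {u\<in>{0..<n}. n dvd (a 2 - y) * u - (b 2 - y)}"
      using arcs_cond[OF assms] by blast
    finally show ?thesis .
  qed
  moreover have "inj_on (FF n y) {u\<in>{0..<n}. n dvd (a 2 - y) * u - (b 2 - y)}"
    by (rule inj_on_subset[OF FF_inj[OF assms(2,3)]]) auto
  ultimately show ?thesis unfolding torus_arcs_def by (simp add: card_image)
qed

lemma cnt1: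
  fixes a b r :: int
  assumes "a > 0" "b > 0" "0 \<le> r" "r < a"
  shows "card {u\<in>{0..<a*b}. u mod a = r} = nat b"
proof -
  have "{u\<in>{0..<a*b}. u mod a = r} = (\<lambda>m. r + a * m) ` {0..<b}"
  proof (intro equalityI subsetI)
    fix u assume u: "u \<in> {u\<in>{0..<a*b}. u mod a = r}"
    have e: "u = a * (u div a) + u mod a" by simp
    have "u mod a = r" using u by simp
    hence "u = r + a * (u div a)" using e by linarith
    moreover have "u div a \<in> {0..<b}"
    proof -
      have u0: "0 \<le> u" "u < a * b" using u by auto
      have "0 \<le> u div a" using u0 assms(1) by (simp add: pos_imp_zdiv_nonneg_iff)
      moreover have "a * (u div a) \<le> u"
      proof -
        have "u = a * (u div a) + u mod a" by simp
        moreover have "0 \<le> u mod a" using assms(1) by simp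
        ultimately show ?thesis by linarith
      qed
      moreover have "u div a < b"
      proof (rule ccontr)
        assume "\<not> u div a < b"
        hence "a * b \<le> a * (u div a)" using assms(1) by (intro mult_left_mono) auto
        thus False using \<open>a * (u div a) \<le> u\<close> u0 by linarith
      qed
      ultimately show ?thesis by simp
    qed
    ultimately show "u \<in> (\<lambda>m. r + a * m) ` {0..<b}" by blast
  next
    fix u assume "u \<in> (\<lambda>m. r + a * m) ` {0..<b}"
    then obtain m where m: "0 \<le> m" "m < b" "u = r + a * m" by auto
    have "a * m \<le> a * (b - 1)" using m assms by (intro mult_left_mono) auto
    hence "u < a * b" using m assms by (simp add: algebra_simps)
    moreover have "0 \<le> u" using m assms by simp
    moreover have "u mod a = r" using m assms by simp
    ultimately show "u \<in> {u\<in>{0..<a*b}. u mod a = r}" by simp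
  qed
  moreover have "inj_on (\<lambda>m. r + a * m) {0..<b}" using assms by (auto simp: inj_on_def)
  ultimately show ?thesis by (simp add: card_image)
qed

lemma dvd_cancel:
  fixes c d q t :: int
  assumes "c > 0" "coprime q d"
  shows "c * d dvd c * q * t \<longleftrightarrow> d dvd t"
proof -
  have "c * d dvd c * q * t \<longleftrightarrow> d dvd q * t" using assms(1) by (simp add: mult.assoc)
  also have "\<dots> \<longleftrightarrow> d dvd t" using assms(2) by (metis coprime_commute coprime_dvd_mult_right_iff)
  finally show ?thesis .
qed



lemma count_nontriv:
  fixes c d k j :: int
  assumes c: "prime c" and d: "d > 0" and nk: "\<not> c dvd k"
  shows "card {u\<in>{0..<c*d}. c*d dvd (d*k) * u - d*j} = nat d"
proof -
  have c0: "c > 0" using c prime_gt_0_int by blast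
  have "coprime c k" using prime_imp_coprime[OF c nk] .
  hence "gcd k c = 1" by (simp add: coprime_commute)
  then obtain w v where wv: "w * k + v * c = 1" using bezout_int[of k c] by auto
  define u0 where "u0 = (w * j) mod c"
  have iff: "c*d dvd (d*k) * u - d*j \<longleftrightarrow> u mod c = u0" for u
  proof -
    have "c*d dvd (d*k) * u - d*j \<longleftrightarrow> d * c dvd d * (k * u - j)"
      by (simp add: algebra_simps)
    also have "\<dots> \<longleftrightarrow> c dvd k * u - j" using d by simp
    also have "\<dots> \<longleftrightarrow> c dvd u - w * j"
    proof
      assume h: "c dvd k * u - j"
      have "u - w * j = w * (k * u - j) + c * (v * u)"
      proof -
        have "u = (w * k + v * c) * u" using wv by simp
        thus ?thesis by (simp add: algebra_simps)
      qed
      thus "c dvd u - w * j" using h by simp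
    next
      assume h: "c dvd u - w * j"
      have "k * u - j = k * (u - w * j) - c * (v * j)"
      proof -
        have "j = (w * k + v * c) * j" using wv by simp
        hence "k * u - j = k * u - (w * k + v * c) * j" by simp
        thus ?thesis by (simp add: algebra_simps)
      qed
      thus "c dvd k * u - j" using h by simp
    qed
    also have "\<dots> \<longleftrightarrow> u mod c = u0" by (simp add: u0_def mod_eq_dvd_iff)
    finally show ?thesis .
  qed
  have "{u\<in>{0..<c*d}. c*d dvd (d*k) * u - d*j} = {u\<in>{0..<c*d}. u mod c = u0}"
    using iff by blast
  also have "card \<dots> = nat d" by (rule cnt1) (use c0 d in \<open>auto simp: u0_def\<close>)
  finally show ?thesis .
qed



theorem theorem6p15:
  fixes p :: nat and n :: int and y :: int
    and G H :: "'v dmg"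
  assumes "p > 0" and "n > 0"
    and "prime (gcd (int p) n)"
    and "y \<in> Zn n"
    and "dmg_iso G (complete_dmg (nat (gcd (int p) n) - 1) (nat (n div gcd (int p) n)))"
    and "dmg_iso H (complete_dmg 1 (nat n))"
    and "fst G \<inter> fst H = {}"
  shows "dmg_iso (full_pointed_coloring_quiver_torus p n y)
           (directed_join G (nat (n div gcd (int p) n)) H)
       \<and> torus_arcs p n y (\<lambda>i. if i \<in> {1..p+1} then y else 0)
                            (\<lambda>i. if i \<in> {1..p+1} then y else 0) = nat n
       \<and> (\<forall>\<beta>\<in>torus_colorings p n y. \<beta> \<noteq> (\<lambda>i. if i \<in> {1..p+1} then y else 0) \<longrightarrow>
             torus_arcs p n y (\<lambda>i. if i \<in> {1..p+1} then y else 0) \<beta> = 0)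
       \<and> (\<forall>\<alpha>\<in>torus_colorings p n y. \<forall>\<beta>\<in>torus_colorings p n y.
             \<alpha> \<noteq> (\<lambda>i. if i \<in> {1..p+1} then y else 0) \<longrightarrow>
             torus_arcs p n y \<alpha> \<beta> = nat (n div gcd (int p) n))"
proof -
  define c where "c = gcd (int p) n"
  define d where "d = n div c"
  define q where "q = int p div c"
  define \<tau> where "\<tau> = (\<lambda>i::nat. if i \<in> {1..p+1} then y else 0)"
  define Col where "Col = torus_colorings p n y"
  have pc: "prime c" using assms(3) by (simp add: c_def)
  have c0: "c > 0" using pc prime_gt_0_int by blast
  have ncd: "n = c * d" by (simp add: c_def d_def)
  have d0: "d > 0" using ncd c0 assms(2) by (simp add: zero_less_mult_iff)
  have pcq: "int p = c * q" by (simp add: c_def q_def)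
  have cop: "coprime q d" unfolding q_def d_def c_def using assms(2) by (intro div_gcd_coprime) auto
  have divlem: "n dvd int p * t \<longleftrightarrow> d dvd t" for t
    unfolding ncd pcq using dvd_cancel[OF c0 cop] .
  note P = assms(1,2,4)
  have tauAP: "\<tau> = AP p n y 0"
    using assms(4) by (auto simp: \<tau>_def AP_def Zn_def intro!: ext)
  have tauCol: "\<tau> \<in> Col" unfolding Col_def tauAP by (rule AP_col[OF P]) simp
  have tau2: "\<tau> 2 - y = 0" using assms(1) by (simp add: \<tau>_def)
  have nontriv: "\<not> n dvd (a 2 - y)" if "a \<in> Col" "a \<noteq> \<tau>" for a
  proof
    assume h: "n dvd (a 2 - y)"
    have "a = AP p n y (a 2 - y)" using col_AP(1)[OF P] that(1) by (simp only: Col_def)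
    also have "\<dots> = AP p n y ((a 2 - y) mod n)" by (simp add: AP_mod)
    also have "\<dots> = \<tau>" using h tauAP by simp
    finally show False using that(2) by simp
  qed
  have pdvd: "n dvd int p * (a 2 - y)" if "a \<in> Col" for a
    using col_AP(2)[OF P] that by (simp add: Col_def)
  have arcs_tt: "torus_arcs p n y \<tau> \<tau> = nat n"
  proof -
    have "{u\<in>{0..<n}. n dvd (\<tau> 2 - y) * u - (\<tau> 2 - y)} = {0..<n}" using tau2 by auto
    thus ?thesis using arcs_eq[OF P tauCol[unfolded Col_def] tauCol[unfolded Col_def]] by simp
  qed
  have arcs_tb: "torus_arcs p n y \<tau> b = 0" if "b \<in> Col" "b \<noteq> \<tau>" for b
  proof -
    have E: "{u\<in>{0..<n}. n dvd (\<tau> 2 - y) * u - (b 2 - y)} = {}"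
      using nontriv[OF that] tau2 by (simp add: dvd_diff_commute)
    have "torus_arcs p n y \<tau> b = card {u\<in>{0..<n}. n dvd (\<tau> 2 - y) * u - (b 2 - y)}"
      using arcs_eq[OF P tauCol[unfolded Col_def]] that(1) by (simp only: Col_def)
    thus ?thesis by (simp only: E card.empty)
  qed
  have arcs_ab: "torus_arcs p n y a b = nat d" if "a \<in> Col" "a \<noteq> \<tau>" "b \<in> Col" for a b
  proof -
    have "d dvd a 2 - y" using pdvd[OF that(1)] divlem by simp
    then obtain k where k: "a 2 - y = d * k" by (elim dvdE)
    have "d dvd b 2 - y" using pdvd[OF that(3)] divlem by simp
    then obtain j where j: "b 2 - y = d * j" by (elim dvdE)
    have "\<not> c dvd k"
    proof
      assume "c dvd k"
      hence "n dvd a 2 - y" unfolding k ncd by (simp add: mult.commute)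
      thus False using nontriv[OF that(1,2)] by simp
    qed
    have "torus_arcs p n y a b = card {u\<in>{0..<n}. n dvd (a 2 - y) * u - (b 2 - y)}"
      using arcs_eq[OF P] that by (simp add: Col_def)
    also have "\<dots> = card {u\<in>{0..<c*d}. c*d dvd (d*k) * u - d*j}" unfolding k j ncd ..
    also have "\<dots> = nat d" by (rule count_nontriv[OF pc d0 \<open>\<not> c dvd k\<close>])
    finally show ?thesis .
  qed
  have cardCol: "card Col = nat c"
  proof -
    define g where "g = (\<lambda>x::nat\<Rightarrow>int. (x 2 - y) mod n)"
    have inj: "inj_on g Col"
    proof
      fix x x' assume h: "x \<in> Col" "x' \<in> Col" "g x = g x'"
      have ex: "x = AP p n y (x 2 - y)" using col_AP(1)[OF P] h(1) by (simp only: Col_def)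
      have ex': "x' = AP p n y (x' 2 - y)" using col_AP(1)[OF P] h(2) by (simp only: Col_def)
      have "x = AP p n y ((x 2 - y) mod n)" unfolding AP_mod by (rule ex)
      also have "\<dots> = AP p n y ((x' 2 - y) mod n)" using h(3) by (simp add: g_def)
      also have "\<dots> = x'" unfolding AP_mod by (rule ex'[symmetric])
      finally show "x = x'" .
    qed
    have img: "g ` Col = {t\<in>{0..<d*c}. t mod d = 0}"
    proof (intro equalityI subsetI)
      fix t assume "t \<in> g ` Col"
      then obtain x where x: "x \<in> Col" "t = g x" by auto
      have "d dvd x 2 - y" using pdvd[OF x(1)] divlem by simp
      moreover have "d dvd n" using ncd by simp
      ultimately have "d dvd t" using x(2) by (simp add: g_def dvd_mod_iff)
      moreover have "0 \<le> t" "t < n" using x(2) assms(2) by (auto simp: g_def)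
      ultimately show "t \<in> {t\<in>{0..<d*c}. t mod d = 0}" using ncd by (simp add: mult.commute)
    next
      fix t assume "t \<in> {t\<in>{0..<d*c}. t mod d = 0}"
      hence t: "0 \<le> t" "t < n" "d dvd t" using ncd by (auto simp: mult.commute)
      have "AP p n y t \<in> Col" unfolding Col_def
        by (rule AP_col[OF P]) (use t divlem in auto)
      moreover have "g (AP p n y t) = t"
      proof -
        have "g (AP p n y t) = ((y + t) mod n - y) mod n" using assms(1) by (simp add: g_def AP_def)
        also have "\<dots> = (y + t - y) mod n" by (rule mod_diff_left_eq)
        also have "\<dots> = t mod n" by simp
        also have "\<dots> = t" using t by simp
        finally show ?thesis .
      qed
      ultimately show "t \<in> g ` Col" by (metis image_eqI)
    qed
    have "card Col = card (g ` Col)" using inj by (simp add: card_image)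
    also have "\<dots> = nat c" unfolding img by (rule cnt1) (use d0 c0 in auto)
    finally show ?thesis .
  qed
  have finCol: "finite Col" by (rule card_ge_0_finite) (use cardCol c0 in simp)
  obtain gG where gG: "bij_betw gG (fst G) {1..nat c - 1}"
    and wG: "\<forall>u\<in>fst G. \<forall>v\<in>fst G. snd G u v = nat d"
    using assms(5) by (auto simp: dmg_iso_def complete_dmg_def c_def d_def)
  obtain hH where hH: "bij_betw hH (fst H) {1..1::nat}"
    and wH: "\<forall>u\<in>fst H. \<forall>v\<in>fst H. snd H u v = nat n"
    using assms(6) by (auto simp: dmg_iso_def complete_dmg_def)
  have "card (fst H) = 1" using bij_betw_same_card[OF hH] by simp
  then obtain h0 where h0: "fst H = {h0}" by (rule card_1_singletonE)
  have finG: "finite (fst G)" using bij_betw_finite[OF gG] by simp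
  have cardG: "card (fst G) = nat c - 1" using bij_betw_same_card[OF gG] by simp
  have h0G: "h0 \<notin> fst G" using assms(7) h0 by auto
  have "card (Col - {\<tau>}) = card (fst G)" using cardG cardCol finCol tauCol by simp
  then obtain \<psi> where psi: "bij_betw \<psi> (Col - {\<tau>}) (fst G)"
    using finite_same_card_bij[OF _ finG] finCol by blast
  define \<phi> where "\<phi> = (\<lambda>x. if x = \<tau> then h0 else \<psi> x)"
  have b1: "bij_betw \<phi> (Col - {\<tau>}) (fst G)"
    using psi by (rule bij_betw_cong[THEN iffD1, rotated]) (simp add: \<phi>_def)
  have b2: "bij_betw \<phi> {\<tau>} {h0}" by (simp add: \<phi>_def bij_betw_def)
  have bij: "bij_betw \<phi> Col (fst G \<union> fst H)"
  proof -
    have "bij_betw \<phi> ((Col - {\<tau>}) \<union> {\<tau>}) (fst G \<union> {h0})"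
      by (rule bij_betw_combine[OF b1 b2]) (use h0G in auto)
    moreover have "(Col - {\<tau>}) \<union> {\<tau>} = Col" using tauCol by auto
    ultimately show ?thesis using h0 by simp
  qed
  have phiG: "\<phi> x \<in> fst G" if "x \<in> Col" "x \<noteq> \<tau>" for x
    using b1 that by (auto simp: bij_betw_def)
  have phiH: "\<phi> x \<notin> fst H" if "x \<in> Col" "x \<noteq> \<tau>" for x
    using phiG[OF that] assms(7) by auto
  have wts: "torus_arcs p n y u v = snd (directed_join G (nat d) H) (\<phi> u) (\<phi> v)"
    if "u \<in> Col" "v \<in> Col" for u v
  proof (cases "u = \<tau>")
    case True
    show ?thesis
    proof (cases "v = \<tau>")
      case True
      thus ?thesis using \<open>u = \<tau>\<close> arcs_tt h0 h0G wH by (simp add: directed_join_def \<phi>_def)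
    next
      case False
      thus ?thesis using \<open>u = \<tau>\<close> arcs_tb[OF that(2) False] h0 h0G phiG[OF that(2) False]
          phiH[OF that(2) False] by (simp add: directed_join_def \<phi>_def)
    qed
  next
    case False
    show ?thesis
    proof (cases "v = \<tau>")
      case True
      thus ?thesis using False arcs_ab[OF that(1) False that(2)] h0 h0G phiG[OF that(1) False]
        by (auto simp: directed_join_def \<phi>_def)
    next
      case vF: False
      thus ?thesis using False arcs_ab[OF that(1) False that(2)] wG phiG[OF that(1) False]
          phiG[OF that(2) vF] by (simp add: directed_join_def)
    qed
  qed
  have iso: "dmg_iso (full_pointed_coloring_quiver_torus p n y) (directed_join G (nat d) H)"
    unfolding dmg_iso_def full_pointed_coloring_quiver_torus_def
    using bij wts by (auto simp: Col_def directed_join_def intro!: exI[of _ \<phi>])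
  show ?thesis
    using iso arcs_tt arcs_tb arcs_ab
    unfolding c_def[symmetric] d_def[symmetric] \<tau>_def[symmetric] Col_def[symmetric]
    by blast
qed

end
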